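(* Let $A,B,C$ be non-collinear points of the real affine plane. Let $A^{+},A^{-}$ be points on line $\overleftrightarrow{BC}$, $B^{+},B^{-}$ points on line $\overleftrightarrow{CA}$, and $C^{+},C^{-}$ points on line $\overleftrightarrow{AB}$, with $A^{+}\neq C$, $A^{-}\neq B$, $B^{+}\neq A$, $B^{-}\neq C$, $C^{+}\neq B$, $C^{-}\neq A$. Define $$a^{+}=\frac{|BA^{+}|}{|A^{+}C|},\quad b^{+}=\frac{|CB^{+}|}{|B^{+}A|},\quad c^{+}=\frac{|AC^{+}|}{|C^{+}B|},\quad a^{-}=\frac{|CA^{-}|}{|A^{-}B|},\quad b^{-}=\frac{|AB^{-}|}{|B^{-}C|},\quad c^{-}=\frac{|BC^{-}|}{|C^{-}A|}.$$ Let $\widehat{B^{-}C^{+}}$ be the intersection point of the lines $\overleftrightarrow{BB^{-}}$ and $\overleftrightarrow{CC^{+}}$, $\widehat{C^{-}A^{+}}$ the intersection of $\overleftrightarrow{CC^{-}}$ and $\overleftrightarrow{AA^{+}}$, and $\widehat{A^{-}B^{+}}$ the intersection of $\overleftrightarrow{AA^{-}}$ and $\overleftrightarrow{BB^{+}}$ (intersections taken in the projective plane, so a point may be at infinity when the two lines are parallel). Then these three points lie on a common (projective) line if and only if $$a^{+}b^{+}c^{+}+a^{-}b^{-}c^{-}=-1+a^{+}a^{-}+b^{+}b^{-}+c^{+}c^{-}.$$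
   Context: Segment lengths are signed: for points on one of the lines $\overleftrightarrow{AB}$, $\overleftrightarrow{BC}$, $\overleftrightarrow{CA}$, $|PQ|$ is positive when $\overrightarrow{PQ}$ points in the direction of $\overrightarrow{AB}$, $\overrightarrow{BC}$, $\overrightarrow{CA}$ respectively; with $|PP|/|PQ|=0$. Equivalently, e.g. $A^{+}=(B+a^{+}C)/(1+a^{+})$ and $A^{-}=(a^{-}B+C)/(1+a^{-})$ as vectors, and similarly for the other points. The hypotheses guarantee that each pair of lines whose intersection is taken is a pair of distinct lines. *)

theory Defs
  imports "HOL-Analysis.Analysis"
begin

text \<open>Signed ratio |PX|/|XQ| for X on the line PQ: the unique t with X - P = t (Q - X).\<close>
definition sratio :: "real^2 \<Rightarrow> real^2 \<Rightarrow> real^2 \<Rightarrow> real" where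
  "sratio P X Q = (THE t. X - P = t *\<^sub>R (Q - X))"

definition hom :: "real^2 \<Rightarrow> real^3" where
  "hom P = vector [P$1, P$2, 1]"

definition pline :: "real^2 \<Rightarrow> real^2 \<Rightarrow> real^3" where
  "pline P Q = cross3 (hom P) (hom Q)"

definition pmeet :: "real^3 \<Rightarrow> real^3 \<Rightarrow> real^3" where
  "pmeet l m = cross3 l m"

definition pcollinear :: "real^3 \<Rightarrow> real^3 \<Rightarrow> real^3 \<Rightarrow> bool" where
  "pcollinear p q r \<longleftrightarrow> (\<exists>l::real^3. l \<noteq> 0 \<and> l \<bullet> p = 0 \<and> l \<bullet> q = 0 \<and> l \<bullet> r = 0)"

end

theory Submission
  imports Defs
begin

definition lin :: "real^3 \<Rightarrow> real^3 \<Rightarrow> real^3 \<Rightarrow> real^3 \<Rightarrow> real^3" where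
  "lin u v w x = (x$1) *\<^sub>R u + (x$2) *\<^sub>R v + (x$3) *\<^sub>R w"

lemma L1: "cross3 (lin u v w x) (lin u v w y) = lin (cross3 v w) (cross3 w u) (cross3 u v) (cross3 x y)"
  unfolding lin_def by (simp add: cross3_simps forall_3)

lemma L2: "cross3 (lin (cross3 v w) (cross3 w u) (cross3 u v) p) (lin (cross3 v w) (cross3 w u) (cross3 u v) q)
   = det (vector [u,v,w]) *\<^sub>R lin u v w (cross3 p q)"
  unfolding lin_def by (simp add: cross3_simps forall_3)

lemma L3: "det (vector [lin u v w x, lin u v w y, lin u v w z]) = det (vector [x,y,z]) * det (vector [u,v,w])"
  unfolding lin_def by (simp add: cross3_simps forall_3)

lemma pcoll_iff: "pcollinear p q r \<longleftrightarrow> det (vector [p,q,r] :: real^3^3) = 0"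
proof -
  let ?M = "vector [p,q,r] :: real^3^3"
  have mv: "?M *v x = 0 \<longleftrightarrow> x \<bullet> p = 0 \<and> x \<bullet> q = 0 \<and> x \<bullet> r = 0" for x
    by (simp add: vec_eq_iff forall_3 matrix_vector_mult_def inner_vec_def sum_3 vector_3 mult.commute)
  have "det ?M = 0 \<longleftrightarrow> \<not> invertible ?M" using invertible_det_nz by blast
  also have "\<dots> \<longleftrightarrow> \<not> (\<forall>x. ?M *v x = 0 \<longrightarrow> x = 0)"
    using invertible_left_inverse matrix_left_invertible_ker by blast
  also have "\<dots> \<longleftrightarrow> pcollinear p q r" unfolding pcollinear_def mv by blast
  finally show ?thesis by simp
qed

lemma sratio_eq:
  assumes "X \<in> affine hull {P,Q}" "X \<noteq> Q"
  shows "X - P = sratio P X Q *\<^sub>R (Q - X)"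
proof -
  obtain u v where X: "X = u *\<^sub>R P + v *\<^sub>R Q" and uv: "u + v = 1"
    using assms(1) affine_hull_2 by blast
  have u: "u \<noteq> 0" using X uv assms(2) by auto
  have uu: "u = 1 - v" using uv by simp
  have X': "X = P + v *\<^sub>R (Q - P)" using X unfolding uu by (simp add: algebra_simps)
  have e1: "Q - X = u *\<^sub>R (Q - P)" unfolding X' uu by (simp add: algebra_simps)
  have e2: "X - P = v *\<^sub>R (Q - P)" unfolding X' by simp
  have ex: "X - P = (v/u) *\<^sub>R (Q - X)" using e1 e2 u by simp
  have nz: "Q - X \<noteq> 0" using assms(2) by simp
  show ?thesis unfolding sratio_def
    apply (rule theI2[of _ "v/u"])
    using ex nz by auto
qed

lemma hom_comb:
  assumes "X - P = a *\<^sub>R (Q - X)" "P \<noteq> Q"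
  shows "1 + a \<noteq> 0" "hom X = (1/(1+a)) *\<^sub>R (hom P + a *\<^sub>R hom Q)"
proof -
  have e: "(1+a) *\<^sub>R X = P + a *\<^sub>R Q" using assms(1) by (simp add: algebra_simps)
  show na: "1 + a \<noteq> 0"
  proof
    assume "1 + a = 0"
    then have "a = -1" by simp
    with e have "P - Q = 0" by (simp add: algebra_simps)
    with assms(2) show False by simp
  qed
  have c: "(1+a) * X$i = P$i + a * Q$i" for i using arg_cong[OF e, of "\<lambda>z. z$i"] by simp
  show "hom X = (1/(1+a)) *\<^sub>R (hom P + a *\<^sub>R hom Q)"
  proof -
    have c': "X$i = (P$i + a*Q$i)/(1+a)" for i using c[of i] na by (simp add: field_simps)
    show ?thesis unfolding hom_def using na
      apply (simp add: vec_eq_iff forall_3 vector_3 c' add_divide_distrib)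
      by (simp add: field_simps)
  qed
qed

lemma coll_aux:
  fixes x y :: "real^2"
  assumes cr: "x$1 * y$2 - x$2 * y$1 = 0"
  shows "collinear {0, x, y}"
proof (cases "x$1 = 0")
  case True
  show ?thesis
  proof (cases "x$2 = 0")
    case True
    with \<open>x$1 = 0\<close> have "x = 0" by (simp add: vec_eq_iff forall_2)
    then show ?thesis by (simp add: collinear_lemma)
  next
    case False
    have "y = (y$2 / x$2) *\<^sub>R x" using cr False \<open>x$1 = 0\<close>
      by (simp add: vec_eq_iff forall_2 field_simps)
    then show ?thesis by (metis collinear_lemma)
  qed
next
  case False
  have "y = (y$1 / x$1) *\<^sub>R x" using cr False
    by (simp add: vec_eq_iff forall_2 field_simps)
  then show ?thesis by (metis collinear_lemma)
qed

lemma D_nz: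
  fixes A B C :: "real^2"
  assumes "\<not> collinear {A,B,C}"
  shows "det (vector [hom A, hom B, hom C] :: real^3^3) \<noteq> 0"
proof
  assume h: "det (vector [hom A, hom B, hom C] :: real^3^3) = 0"
  have cr: "(A - B)$1 * (C - B)$2 - (A - B)$2 * (C - B)$1 = 0" using h
    by (simp add: hom_def det_3 vector_3 algebra_simps)
  have "collinear {0, A - B, C - B}" by (rule coll_aux[OF cr])
  then have "collinear {A,B,C}" by (subst collinear_3) auto
  with assms show False by simp
qed

lemma Mlem: "cross3 (cross3 (lin u v w x) (lin u v w y)) (cross3 (lin u v w z) (lin u v w t))
   = det (vector [u,v,w]) *\<^sub>R lin u v w (cross3 (cross3 x y) (cross3 z t))"
  unfolding L1[of u v w x y] L1[of u v w z t] by (rule L2)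

lemma lin_scale: "c *\<^sub>R lin u v w x = lin u v w (c *\<^sub>R x)"
  unfolding lin_def by (simp add: algebra_simps)

lemma lin_e: "lin u v w (vector [1,0,0]) = u" "lin u v w (vector [0,1,0]) = v" "lin u v w (vector [0,0,1]) = w"
  "lin u v w (vector [k, 0, k*b]) = k *\<^sub>R (u + b *\<^sub>R w)"
  "lin u v w (vector [k, k*b, 0]) = k *\<^sub>R (u + b *\<^sub>R v)"
  "lin u v w (vector [0, k, k*b]) = k *\<^sub>R (v + b *\<^sub>R w)"
  "lin u v w (vector [k*b, k, 0]) = k *\<^sub>R (v + b *\<^sub>R u)"
  "lin u v w (vector [0, k*b, k]) = k *\<^sub>R (w + b *\<^sub>R v)"
  "lin u v w (vector [k*b, 0, k]) = k *\<^sub>R (w + b *\<^sub>R u)"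
  unfolding lin_def by (simp_all add: vector_3 algebra_simps)

lemma key:
  fixes u v w :: "real^3"
  assumes D: "det (vector [u,v,w] :: real^3^3) \<noteq> 0"
    and k: "k1 \<noteq> 0" "k2 \<noteq> 0" "k3 \<noteq> 0" "k4 \<noteq> 0" "k5 \<noteq> 0" "k6 \<noteq> 0"
  shows "pcollinear (cross3 (cross3 v (k4 *\<^sub>R (u + bm *\<^sub>R w))) (cross3 w (k5 *\<^sub>R (u + cp *\<^sub>R v))))
                    (cross3 (cross3 w (k6 *\<^sub>R (v + cm *\<^sub>R u))) (cross3 u (k1 *\<^sub>R (v + ap *\<^sub>R w))))
                    (cross3 (cross3 u (k2 *\<^sub>R (w + am *\<^sub>R v))) (cross3 v (k3 *\<^sub>R (w + bp *\<^sub>R u))))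
     \<longleftrightarrow> ap * bp * cp + am * bm * cm = -1 + ap * am + bp * bm + cp * cm"
proof -
  define D where "D = det (vector [u,v,w] :: real^3^3)"
  have P1: "cross3 (cross3 v (k4 *\<^sub>R (u + bm *\<^sub>R w))) (cross3 w (k5 *\<^sub>R (u + cp *\<^sub>R v)))
     = lin u v w (D *\<^sub>R vector [k4*k5, k4*k5*cp, k4*k5*bm])"
  proof -
    have "cross3 (cross3 (vector [0,1,0]) (vector [k4,0,k4*bm])) (cross3 (vector [0,0,1]) (vector [k5,k5*cp,0]))
       = (vector [k4*k5, k4*k5*cp, k4*k5*bm] :: real^3)"
      by (simp add: cross3_simps forall_3 vector_3)
    then show ?thesis
      using Mlem[of u v w "vector [0,1,0]" "vector [k4,0,k4*bm]" "vector [0,0,1]" "vector [k5,k5*cp,0]"]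
      by (simp only: lin_e D_def lin_scale)
  qed
  have P2: "cross3 (cross3 w (k6 *\<^sub>R (v + cm *\<^sub>R u))) (cross3 u (k1 *\<^sub>R (v + ap *\<^sub>R w)))
     = lin u v w (D *\<^sub>R vector [k6*k1*cm, k6*k1, k6*k1*ap])"
  proof -
    have "cross3 (cross3 (vector [0,0,1]) (vector [k6*cm,k6,0])) (cross3 (vector [1,0,0]) (vector [0,k1,k1*ap]))
       = (vector [k6*k1*cm, k6*k1, k6*k1*ap] :: real^3)"
      by (simp add: cross3_simps forall_3 vector_3)
    then show ?thesis
      using Mlem[of u v w "vector [0,0,1]" "vector [k6*cm,k6,0]" "vector [1,0,0]" "vector [0,k1,k1*ap]"]
      by (simp only: lin_e D_def lin_scale)
  qed
  have P3: "cross3 (cross3 u (k2 *\<^sub>R (w + am *\<^sub>R v))) (cross3 v (k3 *\<^sub>R (w + bp *\<^sub>R u)))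
     = lin u v w (D *\<^sub>R vector [k2*k3*bp, k2*k3*am, k2*k3])"
  proof -
    have "cross3 (cross3 (vector [1,0,0]) (vector [0,k2*am,k2])) (cross3 (vector [0,1,0]) (vector [k3*bp,0,k3]))
       = (vector [k2*k3*bp, k2*k3*am, k2*k3] :: real^3)"
      by (simp add: cross3_simps forall_3 vector_3)
    then show ?thesis
      using Mlem[of u v w "vector [1,0,0]" "vector [0,k2*am,k2]" "vector [0,1,0]" "vector [k3*bp,0,k3]"]
      by (simp only: lin_e D_def lin_scale)
  qed
  define E where "E = 1 - ap*am - cp*cm + ap*bp*cp + am*bm*cm - bp*bm"
  have dt: "det (vector [D *\<^sub>R vector [k4*k5, k4*k5*cp, k4*k5*bm],
                         D *\<^sub>R vector [k6*k1*cm, k6*k1, k6*k1*ap],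
                         D *\<^sub>R vector [k2*k3*bp, k2*k3*am, k2*k3]] :: real^3^3)
      = D^3 * (k1*k2*k3*k4*k5*k6) * E"
    unfolding E_def by (simp add: det_3 vector_3 algebra_simps power3_eq_cube)
  have "pcollinear (cross3 (cross3 v (k4 *\<^sub>R (u + bm *\<^sub>R w))) (cross3 w (k5 *\<^sub>R (u + cp *\<^sub>R v))))
                    (cross3 (cross3 w (k6 *\<^sub>R (v + cm *\<^sub>R u))) (cross3 u (k1 *\<^sub>R (v + ap *\<^sub>R w))))
                    (cross3 (cross3 u (k2 *\<^sub>R (w + am *\<^sub>R v))) (cross3 v (k3 *\<^sub>R (w + bp *\<^sub>R u))))
       \<longleftrightarrow> D^3 * (k1*k2*k3*k4*k5*k6) * E * D = 0"
    unfolding P1 P2 P3 pcoll_iff L3 D_def[symmetric] dt ..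
  also have "\<dots> \<longleftrightarrow> E = 0" using D k unfolding D_def by simp
  also have "\<dots> \<longleftrightarrow> ap * bp * cp + am * bm * cm = -1 + ap * am + bp * bm + cp * cm"
    unfolding E_def by linarith
  finally show ?thesis .
qed

theorem theorem3:
  fixes A B C Ap Am Bp Bm Cp Cm :: "real^2"
  assumes "\<not> collinear {A, B, C}"
    and "Ap \<in> affine hull {B, C}" and "Am \<in> affine hull {B, C}"
    and "Bp \<in> affine hull {C, A}" and "Bm \<in> affine hull {C, A}"
    and "Cp \<in> affine hull {A, B}" and "Cm \<in> affine hull {A, B}"
    and "Ap \<noteq> C" and "Am \<noteq> B" and "Bp \<noteq> A" and "Bm \<noteq> C"
    and "Cp \<noteq> B" and "Cm \<noteq> A"
  shows "pcollinear (pmeet (pline B Bm) (pline C Cp))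
                    (pmeet (pline C Cm) (pline A Ap))
                    (pmeet (pline A Am) (pline B Bp))
     \<longleftrightarrow> sratio B Ap C * sratio C Bp A * sratio A Cp B
         + sratio C Am B * sratio A Bm C * sratio B Cm A
       = -1 + sratio B Ap C * sratio C Am B + sratio C Bp A * sratio A Bm C
            + sratio A Cp B * sratio B Cm A"
proof -
  have nc: "A \<noteq> B" "B \<noteq> C" "C \<noteq> A" using assms(1) by (metis collinear_2 insert_absorb2 insert_commute)+
  have hAp: "Ap - B = sratio B Ap C *\<^sub>R (C - Ap)" using sratio_eq assms(2,8) by blast
  have hAm: "Am - C = sratio C Am B *\<^sub>R (B - Am)" using sratio_eq[of Am C B] assms(3,9) by (simp add: insert_commute)
  have hBp: "Bp - C = sratio C Bp A *\<^sub>R (A - Bp)" using sratio_eq assms(4,10) by blast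
  have hBm: "Bm - A = sratio A Bm C *\<^sub>R (C - Bm)" using sratio_eq[of Bm A C] assms(5,11) by (simp add: insert_commute)
  have hCp: "Cp - A = sratio A Cp B *\<^sub>R (B - Cp)" using sratio_eq assms(6,12) by blast
  have hCm: "Cm - B = sratio B Cm A *\<^sub>R (A - Cm)" using sratio_eq[of Cm B A] assms(7,13) by (simp add: insert_commute)
  note c1 = hom_comb[OF hAp nc(2)] and c2 = hom_comb[OF hAm nc(2)[symmetric]]
   and c3 = hom_comb[OF hBp nc(3)] and c4 = hom_comb[OF hBm nc(3)[symmetric]]
   and c5 = hom_comb[OF hCp nc(1)] and c6 = hom_comb[OF hCm nc(1)[symmetric]]
  show ?thesis
    unfolding pmeet_def pline_def c1(2) c2(2) c3(2) c4(2) c5(2) c6(2)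
    by (rule key[OF D_nz[OF assms(1)]]) (use c1(1) c2(1) c3(1) c4(1) c5(1) c6(1) in simp_all)
qed

end
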